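(* Let $m\in\mathbb{N}$ and $\beta\in(1,\frac{m+2}{2})$. Every $x$ in the interior of the switch region $[\frac{1}{\beta},\frac{(m-1)\beta+1}{\beta(\beta-1)}]$ lies in the interior of some choice interval.
   Context: For $i\in\{1,\ldots,m\}$ the $i$-th choice interval is $[\frac{i}{\beta},\frac{(i-1)\beta+m-(i-1)}{\beta(\beta-1)}]$. *)

theory Defs
  imports "HOL-Analysis.Analysis"
begin

definition choice_interval :: "nat \<Rightarrow> real \<Rightarrow> nat \<Rightarrow> real set" where
  "choice_interval m \<beta> i =
     {real i / \<beta> .. ((real i - 1) * \<beta> + real m - (real i - 1)) / (\<beta> * (\<beta> - 1))}"

definition switch_region :: "nat \<Rightarrow> real \<Rightarrow> real set" where
  "switch_region m \<beta> = {1 / \<beta> .. ((real m - 1) * \<beta> + 1) / (\<beta> * (\<beta> - 1))}"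

end

theory Submission
  imports Defs
begin

theorem lemma2p5:
  fixes m :: nat and \<beta> x :: real
  assumes "1 < \<beta>" and "\<beta> < (real m + 2) / 2"
    and "x \<in> interior (switch_region m \<beta>)"
  shows "\<exists>i\<in>{1..m}. x \<in> interior (choice_interval m \<beta> i)"
proof -
  have b0: "\<beta> > 0" "\<beta> - 1 > 0" "\<beta> * (\<beta> - 1) > 0" using assms(1) by auto
  from assms(3) have x1: "1/\<beta> < x" and x2: "x < ((real m - 1) * \<beta> + 1) / (\<beta> * (\<beta> - 1))"
    unfolding switch_region_def by auto
  have xb: "x * \<beta> > 1" using x1 b0 by (simp add: field_simps)
  have m1: "real m \<ge> 1"
  proof (rule ccontr)
    assume "\<not> real m \<ge> 1" then have "m = 0" by simp
    with assms(1,2) show False by simp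
  qed
  define k where "k = ceiling (x*\<beta>)"
  have k1: "real_of_int k \<ge> x*\<beta>" "real_of_int k - 1 < x*\<beta>" unfolding k_def by linarith+
  have k2: "k \<ge> 2" using xb k1 by linarith
  define i where "i = nat (min (int m) (k - 1))"
  have im: "1 \<le> i" "i \<le> m" using k2 m1 unfolding i_def by auto
  have ri: "real i = min (real m) (real_of_int k - 1)" unfolding i_def using k2 m1 by auto
  have L: "real i / \<beta> < x" using ri k1 b0 by (simp add: field_simps)
  have R: "x < ((real i - 1) * \<beta> + real m - (real i - 1)) / (\<beta> * (\<beta> - 1))"
  proof (cases "real i = real m")
    case True
    then show ?thesis using x2 by (simp add: algebra_simps)
  next
    case False
    then have "real i + 1 = real_of_int k" using ri by linarith
    then have "x \<le> (real i + 1) / \<beta>" using k1 b0 by (simp add: field_simps)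
    also have "\<dots> < ((real i - 1) * \<beta> + real m - (real i - 1)) / (\<beta> * (\<beta> - 1))"
    proof -
      have "(real i + 1) * (\<beta> - 1) < (real i - 1) * \<beta> + real m - (real i - 1)"
      proof -
        have h: "2*(\<beta>-1) < real m" using assms(2) by (simp add: field_simps)
        have "(real i + 1) * (\<beta> - 1) = (real i - 1) * \<beta> + real m - (real i - 1) + (2*(\<beta>-1) - real m)"
          by (simp add: algebra_simps)
        then show ?thesis using h by linarith
      qed
      then have "(real i + 1) * (\<beta> - 1) / (\<beta> * (\<beta> - 1)) < ((real i - 1) * \<beta> + real m - (real i - 1)) / (\<beta> * (\<beta> - 1))"
        using b0 by (intro divide_strict_right_mono) auto
      moreover have "(real i + 1) * (\<beta> - 1) / (\<beta> * (\<beta> - 1)) = (real i + 1) / \<beta>"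
        using b0 by (simp add: field_simps)
      ultimately show ?thesis by simp
    qed
    finally show ?thesis .
  qed
  show ?thesis
    using im L R unfolding choice_interval_def interior_atLeastAtMost_real by auto
qed

end
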